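(* Let $\phi$ be the standard normal density, $\gamma(u)=\frac12e^{-|u|}$ the Laplace density, and $g=\phi*\gamma$. For $\alpha\in[0,1]$ and $x\in\mathbb{R}$, let $a(x)=\frac{\alpha g(x)}{(1-\alpha)\phi(x)+\alpha g(x)}$, $\gamma_x(u)=\phi(x-u)\gamma(u)/g(x)$, and let $\pi_\alpha(\cdot\mid x)=(1-a(x))\delta_0+a(x)\gamma_x(u)\,du$. Set $r_2(\alpha,0,x)=\int u^2\,d\pi_\alpha(u\mid x)$. Then there exists $C_0>0$ such that for all $x\in\mathbb{R}$ and all $\alpha\in[0,1]$, $r_2(\alpha,0,x)\ge C_0\alpha$.
   Context: $\pi_\alpha(\cdot\mid x)$ is the posterior distribution of a single coordinate $\theta$ given observation $x\sim\mathcal{N}(\theta,1)$ under the spike and slab prior $(1-\alpha)\delta_0+\alpha\,\mathrm{Lap}(1)$. *)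

theory Defs
  imports "HOL-Probability.Probability"
begin

definition laplace_density :: "real \<Rightarrow> real" where
  "laplace_density u = exp (- \<bar>u\<bar>) / 2"

definition g_conv :: "real \<Rightarrow> real" where
  "g_conv x = (LINT u|lborel. std_normal_density (x - u) * laplace_density u)"

definition post_weight :: "real \<Rightarrow> real \<Rightarrow> real" where
  "post_weight \<alpha> x = \<alpha> * g_conv x / ((1 - \<alpha>) * std_normal_density x + \<alpha> * g_conv x)"

definition gamma_post :: "real \<Rightarrow> real \<Rightarrow> real" where
  "gamma_post x u = std_normal_density (x - u) * laplace_density u / g_conv x"

text \<open>r_2(alpha,0,x) = second moment of pi_alpha(. | x) = (1-a(x)) delta_0 + a(x) gamma_x(u) du;
  the atom at 0 contributes (1 - a(x)) * 0^2.\<close>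
definition r2 :: "real \<Rightarrow> real \<Rightarrow> real" where
  "r2 \<alpha> x = (1 - post_weight \<alpha> x) * (0::real)^2
     + post_weight \<alpha> x * (LINT u|lborel. u^2 * gamma_post x u)"

end

theory Submission
  imports Defs
begin
lemma P1: "exp (- (v::real)\<^sup>2/2 + \<bar>v\<bar>) \<le> exp 1 * exp (- v\<^sup>2/4)"
proof -
  have "- v\<^sup>2/2 + \<bar>v\<bar> \<le> 1 + (- v\<^sup>2/4)"
    using sum_squares_ge_zero[of "\<bar>v\<bar> - 2" 0] by (simp add: power2_eq_square algebra_simps abs_mult_self_eq)
  then show ?thesis by (simp add: exp_add[symmetric])
qed
lemma P2: "std_normal_density ((x::real)-u) * laplace_density u \<le> exp (-\<bar>x\<bar>) * (exp 1 / 2) * std_normal_density ((x-u)/sqrt 2)"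
proof -
  have t: "- \<bar>u\<bar> \<le> - \<bar>x\<bar> + \<bar>x - u\<bar>" by linarith
  have "exp (- (x-u)\<^sup>2/2) * exp (-\<bar>u\<bar>) \<le> exp (- (x-u)\<^sup>2/2) * (exp (- \<bar>x\<bar>) * exp \<bar>x-u\<bar>)"
    using t by (simp add: exp_add[symmetric])
  also have "\<dots> = exp (- \<bar>x\<bar>) * exp (- (x-u)\<^sup>2/2 + \<bar>x-u\<bar>)" by (simp add: exp_add[symmetric] exp_diff)
  also have "\<dots> \<le> exp (- \<bar>x\<bar>) * (exp 1 * exp (- (x-u)\<^sup>2/4))" using P1[of "x-u"] by simp
  finally have h: "exp (- (x-u)\<^sup>2/2) * exp (-\<bar>u\<bar>) \<le> exp (- \<bar>x\<bar>) * (exp 1 * exp (- (x-u)\<^sup>2/4))" .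
  have sq: "((x-u)/sqrt 2)\<^sup>2 = (x-u)\<^sup>2/2" by (simp add: power_divide)
  show ?thesis unfolding std_normal_density_def laplace_density_def sq
    using mult_left_mono[OF h, of "1/(2 * sqrt (2*pi))"] by (simp add: field_simps)
qed
lemma P3: "std_normal_density (x::real) \<le> exp (1/2) * exp (-\<bar>x\<bar>)"
proof -
  have "- x\<^sup>2/2 \<le> 1/2 + - \<bar>x\<bar>"
    using sum_squares_ge_zero[of "\<bar>x\<bar> - 1" 0] by (simp add: power2_eq_square algebra_simps abs_mult_self_eq)
  then have e: "exp (- x\<^sup>2/2) \<le> exp (1/2) * exp (-\<bar>x\<bar>)" by (simp add: exp_add[symmetric])
  have "1 / sqrt (2*pi) \<le> 1" using pi_gt3 by (simp add: real_sqrt_ge_one)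
  hence "1 / sqrt (2*pi) * exp (- x\<^sup>2/2) \<le> 1 * (exp (1/2) * exp (-\<bar>x\<bar>))"
    by (intro mult_mono e) auto
  then show ?thesis unfolding std_normal_density_def by simp
qed
lemma P4: assumes "\<bar>(x::real)-u\<bar> \<le> 2" "\<bar>u\<bar> \<le> \<bar>x\<bar> + 2"
  shows "exp (-4) / (2 * sqrt (2*pi)) * exp (-\<bar>x\<bar>) \<le> std_normal_density (x-u) * laplace_density u"
proof -
  have "(x-u)\<^sup>2 \<le> 2\<^sup>2" using assms(1) by (metis abs_le_square_iff abs_numeral)
  hence a: "exp (-2) \<le> exp (- (x-u)\<^sup>2/2)" by simp
  have b: "exp (-2) * exp (-\<bar>x\<bar>) \<le> exp (-\<bar>u\<bar>)" using assms(2) by (simp add: exp_add[symmetric])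
  have "exp (-2) * (exp (-2) * exp (-\<bar>x\<bar>)) \<le> exp (- (x-u)\<^sup>2/2) * exp (-\<bar>u\<bar>)"
    by (intro mult_mono a b) auto
  moreover have "exp (-4::real) = exp (-2) * exp (-2)" by (simp add: exp_add[symmetric])
  ultimately show ?thesis unfolding std_normal_density_def laplace_density_def
    by (simp add: field_simps)
qed
lemma P5: "(u::real)\<^sup>2 * laplace_density u \<le> 2"
proof -
  have "1 + \<bar>u\<bar>/2 \<le> exp (\<bar>u\<bar>/2)" using exp_ge_add_one_self by simp
  hence "(1 + \<bar>u\<bar>/2)\<^sup>2 \<le> (exp (\<bar>u\<bar>/2))\<^sup>2" by (intro power_mono) auto
  hence "u\<^sup>2 \<le> 4 * exp \<bar>u\<bar>" by (simp add: power2_eq_square exp_add[symmetric] field_simps)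
  hence "u\<^sup>2 * exp (-\<bar>u\<bar>) \<le> 4 * exp \<bar>u\<bar> * exp (-\<bar>u\<bar>)" by (intro mult_right_mono) auto
  then show ?thesis unfolding laplace_density_def by (simp add: exp_minus field_simps)
qed
lemma A: "integrable lborel std_normal_density"
  using integrable_std_normal_moment[of 0] by simp
lemma B: "integral\<^sup>L lborel std_normal_density = 1"
  using integral_std_normal_moment_even[of 0] by simp
lemma C: "integrable lborel (\<lambda>u. std_normal_density (x - u))"
  using lborel_integrable_real_affine[OF A, of "-1" x] by simp
lemma D: "integrable lborel (\<lambda>u. std_normal_density ((x - u)/sqrt 2))"
  using lborel_integrable_real_affine[OF A, of "-1/sqrt 2" "x/sqrt 2"] by (simp add: diff_divide_distrib)
lemma E: "(LINT u|lborel. std_normal_density ((x - u)/sqrt 2)) = sqrt 2"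
  using lborel_integral_real_affine[of "-1/sqrt 2" std_normal_density "x/sqrt 2"] B by (simp add: diff_divide_distrib)

lemma lap_meas[measurable]: "laplace_density \<in> borel_measurable borel"
  unfolding laplace_density_def by measurable
lemma lap_nonneg: "0 \<le> laplace_density u" unfolding laplace_density_def by simp
lemma lap_le: "laplace_density u \<le> 1"
proof -
  have "exp (- \<bar>u\<bar>) \<le> (1::real)" by simp
  then show ?thesis unfolding laplace_density_def by linarith
qed

lemma I1: "integrable lborel (\<lambda>u. std_normal_density (x - u) * laplace_density u)"
  by (rule Bochner_Integration.integrable_bound[OF C[of x]])
     (auto simp: abs_mult lap_nonneg normal_density_nonneg intro!: mult_left_le[OF lap_le])

lemma I2: "integrable lborel (\<lambda>u. u\<^sup>2 * (std_normal_density (x - u) * laplace_density u))"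
proof (rule Bochner_Integration.integrable_bound[OF integrable_mult_right[OF C[of x], of 2]])
  show "AE u in lborel. norm (u\<^sup>2 * (std_normal_density (x - u) * laplace_density u)) \<le> norm (2 * std_normal_density (x - u))"
  proof (intro AE_I2)
    fix u :: real
    have "u\<^sup>2 * laplace_density u * std_normal_density (x - u) \<le> 2 * std_normal_density (x - u)"
      by (intro mult_right_mono P5) (simp add: normal_density_nonneg)
    then show "norm (u\<^sup>2 * (std_normal_density (x - u) * laplace_density u)) \<le> norm (2 * std_normal_density (x - u))"
      by (simp add: abs_mult lap_nonneg normal_density_nonneg mult_ac)
  qed
qed simp

lemma lower:
  assumes "\<And>u. u \<in> {a..a+1} \<Longrightarrow> (c::real) \<le> (f::real\<Rightarrow>real) u" "\<And>u. 0 \<le> f u" "integrable lborel f"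
  shows "c \<le> (LINT u|lborel. f u)"
proof -
  have "(LINT u|lborel. indicator {a..a+1} u * c) \<le> (LINT u|lborel. f u)"
    using assms by (intro integral_mono) (auto split: split_indicator)
  then show ?thesis by simp
qed

theorem lemma2:
  shows "\<exists>C0::real. C0 > 0 \<and> (\<forall>x::real. \<forall>\<alpha>\<in>{0..1::real}. r2 \<alpha> x \<ge> C0 * \<alpha>)"
proof -
  define c0 :: real where "c0 = exp (-4) / (2 * sqrt (2*pi))"
  define K :: real where "K = exp (1/2) + exp 1 / 2 * sqrt 2"
  have c0p: "c0 > 0" unfolding c0_def by simp
  have Kp: "K > 0" unfolding K_def by (simp add: add_pos_pos)
  have "\<forall>x::real. \<forall>\<alpha>\<in>{0..1::real}. r2 \<alpha> x \<ge> c0 / K * \<alpha>"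
  proof (intro allI ballI)
    fix x \<alpha> :: real assume al: "\<alpha> \<in> {0..1}"
    define f where "f = (\<lambda>u. std_normal_density (x - u) * laplace_density u)"
    define G where "G = g_conv x"
    define N where "N = (LINT u|lborel. u\<^sup>2 * f u)"
    define \<phi> where "\<phi> = std_normal_density x"
    define E where "E = exp (-\<bar>x\<bar>)"
    have Ep: "E > 0" unfolding E_def by simp
    have fnn: "\<And>u. 0 \<le> f u" unfolding f_def by (simp add: lap_nonneg normal_density_nonneg)
    define a where "a = (if x \<ge> 0 then x + 1 else x - 2)"
    have reg: "\<And>u. u \<in> {a..a+1} \<Longrightarrow> \<bar>x-u\<bar> \<le> 2 \<and> 1 \<le> \<bar>u\<bar> \<and> \<bar>u\<bar> \<le> \<bar>x\<bar> + 2"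
      unfolding a_def by (auto split: if_splits)
    have fl: "\<And>u. u \<in> {a..a+1} \<Longrightarrow> c0 * E \<le> f u"
      unfolding f_def c0_def E_def using reg P4 by auto
    have Gl: "c0 * E \<le> G" unfolding G_def g_conv_def
      using lower[of a "c0*E" f, OF fl fnn] I1[of x] unfolding f_def by auto
    have Nl: "c0 * E \<le> N" unfolding N_def
    proof (rule lower[of a])
      fix u assume u: "u \<in> {a..a+1}"
      have "1 \<le> u\<^sup>2" using reg[OF u] by (metis abs_le_square_iff abs_one one_power2)
      hence "1 * f u \<le> u\<^sup>2 * f u" by (intro mult_right_mono fnn)
      then show "c0 * E \<le> u\<^sup>2 * f u" using fl[OF u] by simp
    qed (use fnn I2[of x] in \<open>auto simp: f_def\<close>)
    have Gu: "G \<le> E * (exp 1 / 2) * sqrt 2"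
    proof -
      have "G \<le> (LINT u|lborel. E * (exp 1 / 2) * std_normal_density ((x-u)/sqrt 2))"
        unfolding G_def g_conv_def E_def
        by (rule integral_mono') (use D[of x] P2[of x] fnn[unfolded f_def] in auto)
      also have "\<dots> = E * (exp 1 / 2) * sqrt 2" using E[of x] by simp
      finally show ?thesis .
    qed
    have \<phi>u: "\<phi> \<le> exp (1/2) * E" unfolding \<phi>_def E_def by (rule P3)
    have \<phi>p: "\<phi> > 0" unfolding \<phi>_def std_normal_density_def by simp
    have Gp: "G > 0" using Gl c0p Ep by (smt (verit) mult_pos_pos)
    define D where "D = (1 - \<alpha>) * \<phi> + \<alpha> * G"
    have Dp: "D > 0" unfolding D_def using al \<phi>p Gp
      by (cases "\<alpha> = 1") (auto intro!: add_pos_nonneg)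
    have Du: "D \<le> K * E"
    proof -
      have "D \<le> \<phi> + G" unfolding D_def using al \<phi>p Gp
        by (smt (verit, best) atLeastAtMost_iff mult_left_le_one_le mult_nonneg_nonneg)
      also have "\<dots> \<le> K * E" using \<phi>u Gu unfolding K_def by (simp add: algebra_simps)
      finally show ?thesis .
    qed
    have "(LINT u|lborel. u\<^sup>2 * gamma_post x u) = N / G"
      unfolding N_def G_def gamma_post_def f_def by (simp add: mult.assoc)
    hence r: "r2 \<alpha> x = \<alpha> * N / D"
      unfolding r2_def post_weight_def D_def[symmetric]
      using Gp Dp unfolding G_def D_def \<phi>_def by (simp add: field_simps)
    have "c0 / K * D \<le> c0 / K * (K * E)" using Du c0p Kp by (intro mult_left_mono) auto
    also have "\<dots> = c0 * E" using Kp by simp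
    finally have "c0 / K * D \<le> N" using Nl by simp
    hence "c0 / K * \<alpha> * D \<le> \<alpha> * N" using al
      by (metis atLeastAtMost_iff mult.commute mult.left_commute mult_left_mono)
    then show "c0 / K * \<alpha> \<le> r2 \<alpha> x" unfolding r using Dp by (simp add: field_simps)
  qed
  moreover have "c0 / K > 0" using c0p Kp by simp
  ultimately show ?thesis by blast
qed
end
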